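(* Let $A=\mathbf a\cdot\boldsymbol\sigma$ and $B=\mathbf b\cdot\boldsymbol\sigma$ with $\mathbf a,\mathbf b\in\mathbb{C}^3$, and $q\in\mathbb R$. Then $$AB-qBA=(1-q)(\mathbf a\cdot\mathbf b)\,I+i(1+q)(\mathbf a\times\mathbf b)\cdot\boldsymbol\sigma,$$ $$\|AB-qBA\|_F^2=2\big((1-q)^2|\mathbf a\cdot\mathbf b|^2+(1+q)^2|\mathbf a\times\mathbf b|^2\big),$$ and $\|AB-qBA\|_F^2\le (1+q^2)\|A\|_F^2\|B\|_F^2$.
   Context: $\sigma_1,\sigma_2,\sigma_3$ are the Pauli matrices, $\mathbf r\cdot\boldsymbol\sigma=\sum_{i=1}^3 r_i\sigma_i$, $\mathbf a\cdot\mathbf b=\sum_i a_ib_i$ (bilinear, no conjugation), $\mathbf a\times\mathbf b$ is the (bilinear) cross product, $|\cdot|$ is the Hermitian norm on $\mathbb{C}^3$, $I$ is the $2\times2$ identity, and $\|X\|_F=\sqrt{\operatorname{tr}(XX^\dagger)}$ is the Frobenius norm. *)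

theory Defs
  imports "HOL-Analysis.Analysis"
begin

type_synonym cmat2 = "complex ^ 2 ^ 2"

definition mat2 :: "complex \<Rightarrow> complex \<Rightarrow> complex \<Rightarrow> complex \<Rightarrow> cmat2" where
  "mat2 a b c d = (\<chi> i j. if i = 1 then (if j = 1 then a else b) else (if j = 1 then c else d))"

definition sigma1 :: cmat2 where "sigma1 = mat2 0 1 1 0"
definition sigma2 :: cmat2 where "sigma2 = mat2 0 (-\<i>) \<i> 0"
definition sigma3 :: cmat2 where "sigma3 = mat2 1 0 0 (-1)"

definition pauli :: "3 \<Rightarrow> cmat2" where
  "pauli k = (if k = 1 then sigma1 else if k = 2 then sigma2 else sigma3)"

definition pauli_dot :: "complex ^ 3 \<Rightarrow> cmat2" where
  "pauli_dot r = (\<Sum>k\<in>UNIV. (\<chi> i j. r $ k * (pauli k $ i $ j)))"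

text \<open>bilinear dot product (no conjugation)\<close>
definition bdot :: "complex ^ 3 \<Rightarrow> complex ^ 3 \<Rightarrow> complex" where
  "bdot a b = (\<Sum>i\<in>UNIV. a $ i * b $ i)"

definition bcross :: "complex ^ 3 \<Rightarrow> complex ^ 3 \<Rightarrow> complex ^ 3" where
  "bcross a b = vector [a$2 * b$3 - a$3 * b$2, a$3 * b$1 - a$1 * b$3, a$1 * b$2 - a$2 * b$1]"

definition ctrace :: "cmat2 \<Rightarrow> complex" where
  "ctrace X = (\<Sum>i\<in>UNIV. X $ i $ i)"

definition dagger :: "cmat2 \<Rightarrow> cmat2" where
  "dagger X = (\<chi> i j. cnj (X $ j $ i))"

text \<open>Frobenius norm sqrt(tr(X X^dagger)); tr(X X^dagger) is real and nonnegative.\<close>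
definition frob :: "cmat2 \<Rightarrow> real" where
  "frob X = sqrt (Re (ctrace (X ** dagger X)))"

end

theory Submission imports Defs begin
lemma pd: "pauli_dot a $ 1 $ 1 = a$3" "pauli_dot a $ 1 $ 2 = a$1 - \<i>*a$2"
  "pauli_dot a $ 2 $ 1 = a$1 + \<i>*a$2" "pauli_dot a $ 2 $ 2 = - a$3"
  by (simp_all add: pauli_dot_def sum_component sum_3 pauli_def sigma1_def sigma2_def sigma3_def mat2_def)

lemma frob_sq: "(frob X)\<^sup>2 = (cmod (X$1$1))\<^sup>2 + (cmod (X$1$2))\<^sup>2 + (cmod (X$2$1))\<^sup>2 + (cmod (X$2$2))\<^sup>2"
proof -
  have "Re (ctrace (X ** dagger X)) = (cmod (X$1$1))\<^sup>2 + (cmod (X$1$2))\<^sup>2 + (cmod (X$2$1))\<^sup>2 + (cmod (X$2$2))\<^sup>2"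
    unfolding cmod_power2 by (simp add: ctrace_def dagger_def matrix_matrix_mult_def sum_2 power2_eq_square)
  moreover have "0 \<le> (cmod (X$1$1))\<^sup>2 + (cmod (X$1$2))\<^sup>2 + (cmod (X$2$1))\<^sup>2 + (cmod (X$2$2))\<^sup>2" by simp
  ultimately show ?thesis by (simp add: frob_def)
qed

lemma lag1: "(cmod (x1*y1+x2*y2+x3*y3))\<^sup>2 + (cmod (x1*cnj y2 - x2*cnj y1))\<^sup>2 + (cmod (x2*cnj y3 - x3*cnj y2))\<^sup>2 + (cmod (x3*cnj y1 - x1*cnj y3))\<^sup>2
  = ((cmod x1)\<^sup>2 + (cmod x2)\<^sup>2 + (cmod x3)\<^sup>2) * ((cmod y1)\<^sup>2 + (cmod y2)\<^sup>2 + (cmod y3)\<^sup>2)"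
  unfolding cmod_power2 by (simp add: power2_eq_square algebra_simps)

lemma lag2: "(cmod (x1*cnj y1+x2*cnj y2+x3*cnj y3))\<^sup>2 + (cmod (x1*y2 - x2*y1))\<^sup>2 + (cmod (x2*y3 - x3*y2))\<^sup>2 + (cmod (x3*y1 - x1*y3))\<^sup>2
  = ((cmod x1)\<^sup>2 + (cmod x2)\<^sup>2 + (cmod x3)\<^sup>2) * ((cmod y1)\<^sup>2 + (cmod y2)\<^sup>2 + (cmod y3)\<^sup>2)"
  unfolding cmod_power2 by (simp add: power2_eq_square algebra_simps)

lemma par: "(cmod (u+v))\<^sup>2 + (cmod (u-v))\<^sup>2 = 2*(cmod u)\<^sup>2 + 2*(cmod v)\<^sup>2"
  unfolding cmod_power2 by (simp add: power2_eq_square algebra_simps)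

lemma nv: "(norm (x::complex^3))\<^sup>2 = (cmod (x$1))\<^sup>2 + (cmod (x$2))\<^sup>2 + (cmod (x$3))\<^sup>2"
  by (simp add: norm_vec_def L2_set_def sum_3)

lemma bc: "bcross a b $ 1 = a$2 * b$3 - a$3 * b$2" "bcross a b $ 2 = a$3 * b$1 - a$1 * b$3" "bcross a b $ 3 = a$1 * b$2 - a$2 * b$1"
  by (simp_all add: bcross_def)

theorem mainTheorem7:
  fixes a b :: "complex ^ 3" and q :: real
  defines "A \<equiv> pauli_dot a" and "B \<equiv> pauli_dot b"
  shows "A ** B - (\<chi> i j. complex_of_real q * (B ** A) $ i $ j) =
           (\<chi> i j. (1 - complex_of_real q) * bdot a b * (mat 1 :: cmat2) $ i $ j
                    + \<i> * (1 + complex_of_real q) * pauli_dot (bcross a b) $ i $ j)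
       \<and> (frob (A ** B - (\<chi> i j. complex_of_real q * (B ** A) $ i $ j)))\<^sup>2 =
           2 * ((1 - q)\<^sup>2 * (cmod (bdot a b))\<^sup>2 + (1 + q)\<^sup>2 * (norm (bcross a b))\<^sup>2)
       \<and> (frob (A ** B - (\<chi> i j. complex_of_real q * (B ** A) $ i $ j)))\<^sup>2
           \<le> (1 + q\<^sup>2) * (frob A)\<^sup>2 * (frob B)\<^sup>2"
proof -
  define M where "M = A ** B - (\<chi> i j. complex_of_real q * (B ** A) $ i $ j)"
  define c where "c = (1 - complex_of_real q) * bdot a b"
  define w where "w = \<i> * (1 + complex_of_real q)"
  define d where "d = bcross a b"
  have E: "M = (\<chi> i j. (1 - complex_of_real q) * bdot a b * (mat 1 :: cmat2) $ i $ j
                    + \<i> * (1 + complex_of_real q) * pauli_dot (bcross a b) $ i $ j)"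
    unfolding M_def A_def B_def
    by (simp add: vec_eq_iff forall_2 matrix_matrix_mult_def sum_2 pd bc bdot_def sum_3 mat_def;
        simp add: algebra_simps)
  have M11: "M$1$1 = c + w*d$3" and M12: "M$1$2 = w*d$1 - w*\<i>*d$2"
   and M21: "M$2$1 = w*d$1 + w*\<i>*d$2" and M22: "M$2$2 = c - w*d$3"
    unfolding E c_def w_def d_def by (simp_all add: pd mat_def algebra_simps)
  have cw: "(cmod c)\<^sup>2 = (1-q)\<^sup>2 * (cmod (bdot a b))\<^sup>2" "\<And>z. (cmod (w*z))\<^sup>2 = (1+q)\<^sup>2 * (cmod z)\<^sup>2"
  proof -
    have e1: "c = complex_of_real (1-q) * bdot a b" unfolding c_def by simp
    have e2: "w = \<i> * complex_of_real (1+q)" unfolding w_def by simp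
    show "(cmod c)\<^sup>2 = (1-q)\<^sup>2 * (cmod (bdot a b))\<^sup>2"
      unfolding e1 norm_mult norm_of_real power_mult_distrib power2_abs ..
    show "(cmod (w*z))\<^sup>2 = (1+q)\<^sup>2 * (cmod z)\<^sup>2" for z
      unfolding e2 norm_mult norm_of_real power_mult_distrib power2_abs by simp
  qed
  have F: "(frob M)\<^sup>2 = 2 * ((1 - q)\<^sup>2 * (cmod (bdot a b))\<^sup>2 + (1 + q)\<^sup>2 * (norm (bcross a b))\<^sup>2)"
  proof -
    have "(frob M)\<^sup>2 = ((cmod (c + w*d$3))\<^sup>2 + (cmod (c - w*d$3))\<^sup>2) + ((cmod (w*d$1 + w*\<i>*d$2))\<^sup>2 + (cmod (w*d$1 - w*\<i>*d$2))\<^sup>2)"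
      by (simp add: frob_sq M11 M12 M21 M22)
    also have "\<dots> = 2*(cmod c)\<^sup>2 + 2*(cmod (w*d$3))\<^sup>2 + 2*(cmod (w*d$1))\<^sup>2 + 2*(cmod (w*(\<i>*d$2)))\<^sup>2"
      by (simp add: par mult.assoc)
    also have "\<dots> = 2 * ((1 - q)\<^sup>2 * (cmod (bdot a b))\<^sup>2 + (1 + q)\<^sup>2 * (norm d)\<^sup>2)"
      using cw(2)[of 1] by (simp add: cw(1) norm_mult power_mult_distrib nv algebra_simps)
    finally show ?thesis by (simp add: d_def)
  qed
  have FA: "(frob (pauli_dot x))\<^sup>2 = 2 * (norm x)\<^sup>2" for x
  proof -
    have "(frob (pauli_dot x))\<^sup>2 = 2*(cmod (x$3))\<^sup>2 + ((cmod (x$1 + \<i>*x$2))\<^sup>2 + (cmod (x$1 - \<i>*x$2))\<^sup>2)"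
      by (simp add: frob_sq pd)
    also have "\<dots> = 2 * (norm x)\<^sup>2" by (simp add: par nv norm_mult)
    finally show ?thesis .
  qed
  define Na where "Na = (norm a)\<^sup>2"
  define Nb where "Nb = (norm b)\<^sup>2"
  have X: "(cmod (bdot a b))\<^sup>2 \<le> Na * Nb"
  proof -
    have "(cmod (bdot a b))\<^sup>2 + (cmod (a$1*cnj (b$2) - a$2*cnj (b$1)))\<^sup>2 + (cmod (a$2*cnj (b$3) - a$3*cnj (b$2)))\<^sup>2 + (cmod (a$3*cnj (b$1) - a$1*cnj (b$3)))\<^sup>2 = Na * Nb"
      unfolding Na_def Nb_def nv bdot_def sum_3 by (rule lag1)
    then show ?thesis by (smt (verit) zero_le_power2)
  qed
  have Y: "(norm (bcross a b))\<^sup>2 \<le> Na * Nb"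
  proof -
    have "(cmod (a$1*cnj (b$1) + a$2*cnj (b$2) + a$3*cnj (b$3)))\<^sup>2 + (cmod (a$1*b$2 - a$2*b$1))\<^sup>2 + (cmod (a$2*b$3 - a$3*b$2))\<^sup>2 + (cmod (a$3*b$1 - a$1*b$3))\<^sup>2 = Na * Nb"
      unfolding Na_def Nb_def nv by (rule lag2)
    then show ?thesis by (simp add: nv bc) (smt (verit) zero_le_power2)
  qed
  have I: "(frob M)\<^sup>2 \<le> (1 + q\<^sup>2) * (frob A)\<^sup>2 * (frob B)\<^sup>2"
  proof -
    have "(1 - q)\<^sup>2 * (cmod (bdot a b))\<^sup>2 \<le> (1 - q)\<^sup>2 * (Na*Nb)" by (rule mult_left_mono[OF X]) simp
    moreover have "(1 + q)\<^sup>2 * (norm (bcross a b))\<^sup>2 \<le> (1 + q)\<^sup>2 * (Na*Nb)" by (rule mult_left_mono[OF Y]) simp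
    ultimately have "(frob M)\<^sup>2 \<le> 2 * ((1 - q)\<^sup>2 * (Na*Nb) + (1 + q)\<^sup>2 * (Na*Nb))" unfolding F using X Y by (intro mult_left_mono add_mono) auto
    also have "\<dots> = (1 + q\<^sup>2) * (frob A)\<^sup>2 * (frob B)\<^sup>2"
      unfolding A_def B_def FA Na_def Nb_def by (simp add: power2_eq_square algebra_simps)
    finally show ?thesis .
  qed
  show ?thesis using E F I unfolding M_def by simp
qed
end
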